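(* Let $\mathcal X$ be a finite multi-set of real symmetric $2\times2$ matrices with $\lambda_1$ the unique largest eigenvalue of $\mathcal X$ (with eigenvector $u_1$, belonging to $X_1$, and $v_1\perp u_1$ a unit vector). Suppose the second largest eigenvalue $\lambda_2$ of $\mathcal X$ is unique and its associated eigenvector $u_2$ is not perpendicular to $u_1$. Then there exists $\varepsilon>0$ such that $$S':=\lambda_1u_1u_1^{\mathsf T}+(\lambda_2-\varepsilon)v_1v_1^{\mathsf T}\in\mathcal U(\mathcal X).$$
   Context: $\mathrm{Sym}(2)$ is the set of real symmetric $2\times2$ matrices; $A\le_{\mathrm L}B$ (Loewner order) means $B-A$ is positive semidefinite. $\mathcal U(\mathcal X):=\{Y\in\mathrm{Sym}(2):X\le_{\mathrm L}Y\ \forall X\in\mathcal X\}$. Each $X\in\mathcal X$ has spectral form $X=\lambda uu^{\mathsf T}+\mu vv^{\mathsf T}$, $\lambda\ge\mu$, $u\perp v$ unit vectors; "the eigenvalues of $\mathcal X$" means the multi-set of all these $\lambda,\mu$ (two per matrix) with their associated eigenvectors; an eigenvalue is unique if it occurs exactly once in this multi-set. *)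

theory Defs
  imports "HOL-Analysis.Analysis" "HOL-Library.Multiset"
begin

type_synonym mat2 = "real^2^2"

definition sym2 :: "mat2 \<Rightarrow> bool" where
  "sym2 A \<longleftrightarrow> transpose A = A"

definition outer :: "real^2 \<Rightarrow> real^2 \<Rightarrow> mat2" where
  "outer u v = (\<chi> i j. u $ i * v $ j)"

definition psd2 :: "mat2 \<Rightarrow> bool" where
  "psd2 A \<longleftrightarrow> sym2 A \<and> (\<forall>x. 0 \<le> x \<bullet> (A *v x))"

definition loewner_le :: "mat2 \<Rightarrow> mat2 \<Rightarrow> bool" where
  "loewner_le A B \<longleftrightarrow> psd2 (B - A)"

definition upper_bounds :: "mat2 multiset \<Rightarrow> mat2 set" where
  "upper_bounds XX = {Y. sym2 Y \<and> (\<forall>X\<in>#XX. loewner_le X Y)}"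

definition spectral_form :: "mat2 \<Rightarrow> real \<Rightarrow> real \<Rightarrow> real^2 \<Rightarrow> real^2 \<Rightarrow> bool" where
  "spectral_form X l m u v \<longleftrightarrow> m \<le> l \<and> norm u = 1 \<and> norm v = 1 \<and> u \<bullet> v = 0 \<and>
     X = l *\<^sub>R outer u u + m *\<^sub>R outer v v"

definition eig_hi :: "mat2 \<Rightarrow> real" where
  "eig_hi X = (THE l. \<exists>m u v. spectral_form X l m u v)"

definition eig_lo :: "mat2 \<Rightarrow> real" where
  "eig_lo X = (THE m. \<exists>l u v. spectral_form X l m u v)"

definition eigs :: "mat2 multiset \<Rightarrow> real multiset" where
  "eigs XX = \<Sum>\<^sub># (image_mset (\<lambda>X. {#eig_hi X, eig_lo X#}) XX)"

end

theory Submission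
  imports Defs
begin


lemma inner2: "(x::real^2) \<bullet> y = x$1*y$1 + x$2*y$2"
  by (simp add: inner_vec_def sum_2)

lemma mv2: "((A::mat2) *v (x::real^2))$1 = A$1$1*x$1 + A$1$2*x$2" "((A::mat2) *v (x::real^2))$2 = A$2$1*x$1 + A$2$2*x$2"
  by (simp_all add: matrix_vector_mult_def sum_2)

lemma mat2_eq: "(A::mat2) = B \<longleftrightarrow> (A$1$1 = B$1$1 \<and> A$1$2 = B$1$2 \<and> A$2$1 = B$2$1 \<and> A$2$2 = B$2$2)"
  by (auto simp add: vec_eq_iff forall_2)

lemma sym2_iff: "sym2 A \<longleftrightarrow> A$1$2 = A$2$1"
  by (auto simp add: sym2_def mat2_eq transpose_def)

lemma norm1: "norm (x::real^2) = 1 \<longleftrightarrow> x$1^2 + x$2^2 = 1"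
  by (simp add: norm_eq_1 inner2 power2_eq_square)

lemma spec_coord: "spectral_form X l m u v \<longleftrightarrow> m \<le> l \<and> u$1^2+u$2^2 = 1 \<and> v$1^2+v$2^2=1 \<and> u$1* v$1+u$2* v$2 = 0
  \<and> X$1$1 = l*u$1*u$1 + m* v$1* v$1 \<and> X$1$2 = l*u$1*u$2 + m* v$1* v$2
  \<and> X$2$1 = l*u$2*u$1 + m* v$2* v$1 \<and> X$2$2 = l*u$2*u$2 + m* v$2* v$2"
  unfolding spectral_form_def norm1 inner2 mat2_eq by (simp add: outer_def mult.assoc)


lemma cols:
  fixes u1 u2 w1 w2 :: real
  assumes h1: "u1^2+u2^2 = 1" and h2: "w1^2+w2^2=1" and h3: "u1*w1+u2*w2 = 0"
  shows "u1^2+w1^2 = 1 \<and> u2^2+w2^2 = 1 \<and> u1*u2+w1*w2 = 0"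
proof -
  define k where "k = u1*w2 - u2*w1"
  have a: "w1 = -k*u2"
  proof -
    have "-k*u2 = -u1*(u2*w2) + u2^2*w1" by (simp add: k_def algebra_simps power2_eq_square)
    also have "u2*w2 = -(u1*w1)" using h3 by simp
    finally have "-k*u2 = (u1^2+u2^2)*w1" by (simp add: algebra_simps power2_eq_square)
    then show ?thesis using h1 by simp
  qed
  have b: "w2 = k*u1"
  proof -
    have "k*u1 = u1^2*w2 - u1*w1*u2" by (simp add: k_def algebra_simps power2_eq_square)
    also have "u1*w1 = -(u2*w2)" using h3 by simp
    finally have "k*u1 = (u1^2+u2^2)*w2" by (simp add: algebra_simps power2_eq_square)
    then show ?thesis using h1 by simp
  qed
  have "k^2*(u1^2+u2^2) = 1" using h2 unfolding a b by (simp add: power_mult_distrib algebra_simps)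
  then have k: "k^2 = 1" using h1 by simp
  have k2: "k*k = 1" using k by (simp add: power2_eq_square)
  have f1: "(-k*u2)^2 = u2^2" using k by (simp add: power_mult_distrib)
  have f2: "(k*u1)^2 = u1^2" using k by (simp add: power_mult_distrib)
  have e1: "u1^2+(-k*u2)^2 = 1" using h1 f1 by simp
  have e2: "u2^2+(k*u1)^2 = 1" using h1 f2 by simp
  have e3: "u1*u2+(-k*u2)*(k*u1) = 0" using k2 by (simp add: algebra_simps)
  show ?thesis unfolding a b using e1 e2 e3 by blast
qed


lemma bilin:
  assumes "spectral_form X l m u v"
  shows "y \<bullet> (X *v x) = l*(y\<bullet>u)*(u\<bullet>x) + m*(y\<bullet>v)*(v\<bullet>x)"
  using assms unfolding spec_coord inner2 mv2 by (simp add: algebra_simps)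

lemma basis_expand:
  assumes "norm u = 1" "norm v = 1" "u \<bullet> v = 0"
  shows "(a\<bullet>u)*(u\<bullet>x) + (a\<bullet>v)*(v\<bullet>x) = a \<bullet> (x::real^2)"
proof -
  have c: "(u$1)^2+(v$1)^2 = 1 \<and> (u$2)^2+(v$2)^2 = 1 \<and> u$1*u$2+v$1* v$2 = 0"
    using cols assms unfolding norm1 inner2 by blast
  have "(a\<bullet>u)*(u\<bullet>x) + (a\<bullet>v)*(v\<bullet>x) = a$1*x$1*((u$1)^2+(v$1)^2) + a$2*x$2*((u$2)^2+(v$2)^2)
     + (a$1*x$2 + a$2*x$1)*(u$1*u$2+v$1* v$2)"
    unfolding inner2 by (simp add: algebra_simps power2_eq_square)
  also have "\<dots> = a \<bullet> x" using c by (simp add: inner2)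
  finally show ?thesis .
qed

definition trc :: "mat2 \<Rightarrow> real" where "trc X = X$1$1 + X$2$2"
definition frb :: "mat2 \<Rightarrow> real" where "frb X = (X$1$1)^2 + (X$1$2)^2 + (X$2$1)^2 + (X$2$2)^2"

lemma spec_tr_fr:
  assumes "spectral_form X l m u v"
  shows "trc X = l + m" "frb X = l^2 + m^2"
proof -
  have h: "(u$1)^2+(u$2)^2 = 1" "(v$1)^2+(v$2)^2=1" "u$1* v$1+u$2* v$2 = 0"
    using assms unfolding spec_coord by auto
  have x: "X$1$1 = l*u$1*u$1 + m* v$1* v$1" "X$1$2 = l*u$1*u$2 + m* v$1* v$2"
    "X$2$1 = l*u$2*u$1 + m* v$2* v$1" "X$2$2 = l*u$2*u$2 + m* v$2* v$2"
    using assms unfolding spec_coord by auto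
  have "trc X = l*((u$1)^2+(u$2)^2) + m*((v$1)^2+(v$2)^2)"
    unfolding trc_def x by (simp add: algebra_simps power2_eq_square)
  then show "trc X = l + m" using h by simp
  have "frb X = l^2*((u$1)^2+(u$2)^2)^2 + 2*l*m*(u$1* v$1+u$2* v$2)^2 + m^2*((v$1)^2+(v$2)^2)^2"
    unfolding frb_def x by (simp add: algebra_simps power2_eq_square)
  then show "frb X = l^2 + m^2" using h by simp
qed

lemma spec_hi_val:
  assumes "spectral_form X l m u v"
  shows "l = (trc X + sqrt (2*frb X - (trc X)^2))/2" "m = (trc X - sqrt (2*frb X - (trc X)^2))/2"
proof -
  have lm: "m \<le> l" using assms unfolding spectral_form_def by auto
  have "2*frb X - (trc X)^2 = (l-m)^2" using spec_tr_fr[OF assms] by (simp add: power2_eq_square algebra_simps)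
  then have "sqrt (2*frb X - (trc X)^2) = l - m" using lm by simp
  then show "l = (trc X + sqrt (2*frb X - (trc X)^2))/2" "m = (trc X - sqrt (2*frb X - (trc X)^2))/2"
    using spec_tr_fr[OF assms] by simp_all
qed

lemma eig_hi_eq: assumes "spectral_form X l m u v" shows "eig_hi X = l"
  unfolding eig_hi_def
proof (rule the_equality)
  show "\<exists>m u v. spectral_form X l m u v" using assms by blast
  fix l' assume "\<exists>m u v. spectral_form X l' m u v"
  then obtain m' u' v' where "spectral_form X l' m' u' v'" by blast
  then show "l' = l" using spec_hi_val(1)[OF assms] spec_hi_val(1) by metis
qed

lemma eig_lo_eq: assumes "spectral_form X l m u v" shows "eig_lo X = m"
  unfolding eig_lo_def
proof (rule the_equality)
  show "\<exists>l u v. spectral_form X l m u v" using assms by blast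
  fix m' assume "\<exists>l u v. spectral_form X l m' u v"
  then obtain l' u' v' where "spectral_form X l' m' u' v'" by blast
  then show "m' = m" using spec_hi_val(2)[OF assms] spec_hi_val(2) by metis
qed

lemma eigs_add: "eigs (add_mset X M) = add_mset (eig_hi X) (add_mset (eig_lo X) (eigs M))"
  by (simp add: eigs_def)



lemma spec_exists:
  assumes "sym2 X"
  shows "\<exists>l m u v. spectral_form X l m u v"
proof -
  define a where "a = X$1$1"
  define b where "b = X$1$2"
  define d where "d = X$2$2"
  have b': "X$2$1 = b" using assms unfolding sym2_iff b_def by simp
  show ?thesis
  proof (cases "b = 0")
    case True
    show ?thesis
    proof (cases "d \<le> a")
      case True
      have "spectral_form X a d (vector [1,0]) (vector [0,1])"
        unfolding spec_coord using True \<open>b = 0\<close> b' by (simp add: vector_2 a_def b_def d_def)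
      then show ?thesis by blast
    next
      case False
      have "spectral_form X d a (vector [0,1]) (vector [1,0])"
        unfolding spec_coord using False \<open>b = 0\<close> b' by (simp add: vector_2 a_def b_def d_def)
      then show ?thesis by blast
    qed
  next
    case False
    define D where "D = sqrt ((d-a)^2 + 4 * b^2)"
    define s where "s = ((d-a)+D)/2"
    have bb: "b^2 > 0" using False by simp
    have D2: "D^2 = (d-a)^2 + 4 * b^2" unfolding D_def by (simp add: add_nonneg_nonneg)
    have D0: "D \<ge> 0" unfolding D_def by simp
    have Dgt: "D > \<bar>d-a\<bar>"
    proof -
      have "\<bar>d-a\<bar>^2 < D^2" using D2 bb by simp
      then show ?thesis using D0 by (meson abs_ge_zero power_less_imp_less_base)
    qed
    have "d - a + D > 0" using Dgt abs_ge_minus_self[of "d-a"] by linarith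
    then have s0: "s > 0" by (simp add: s_def)
    have E: "s * s = (d-a) * s + b * b" unfolding s_def using D2 by (simp add: power2_eq_square field_simps)
    define n where "n = sqrt (b^2 + s^2)"
    have n2: "n^2 = b^2+s^2" unfolding n_def by simp
    have bs: "b ^ 2 + s ^ 2 > 0" using bb by (simp add: add_pos_nonneg)
    have n0: "n > 0" unfolding n_def using bs by simp
    define l where "l = a + s"
    define m where "m = d - s"
    have i1: "(a+s) * b^2 + (d-s) * s^2 = a * (b^2+s^2)" using E by algebra
    have i2: "(a-d+2 * s) * s = b^2+s^2" using E by algebra
    have i3: "(a+s) * s^2 + (d-s) * b^2 = d * (b^2+s^2)" using E by algebra
    have f0: "m \<le> l" using D0 unfolding l_def m_def s_def by (simp add: field_simps)
    have f1: "(b/n)^2 + (s/n)^2 = 1" using n2 n0 s0 by (simp add: power_divide add_divide_distrib[symmetric])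
    have f2: "(-s/n)^2 + (b/n)^2 = 1" using n2 n0 s0 by (simp add: power_divide add_divide_distrib[symmetric])
    have f3: "(b/n) * (-s/n) + (s/n) * (b/n) = 0" by (simp add: algebra_simps)
    have f4: "X$1$1 = l * (b/n) * (b/n) + m * (-s/n) * (-s/n)"
    proof -
      have "l * (b/n) * (b/n) + m * (-s/n) * (-s/n) = ((a+s) * b^2 + (d-s) * s^2) / n^2"
        using n0 by (simp add: l_def m_def power2_eq_square field_simps)
      also have "\<dots> = a" using i1 n2 bs s0 by simp
      finally show ?thesis by (simp add: a_def)
    qed
    have f5: "X$1$2 = l * (b/n) * (s/n) + m * (-s/n) * (b/n)"
    proof -
      have "l * (b/n) * (s/n) + m * (-s/n) * (b/n) = ((a-d+2 * s) * s) * b / n^2"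
        using n0 by (simp add: l_def m_def power2_eq_square field_simps)
      also have "\<dots> = b" using i2 n2 bs s0 by simp
      finally show ?thesis by (simp add: b_def)
    qed
    have f6: "X$2$1 = l * (s/n) * (b/n) + m * (b/n) * (-s/n)"
      using f5 b' by (simp add: algebra_simps b_def)
    have f7: "X$2$2 = l * (s/n) * (s/n) + m * (b/n) * (b/n)"
    proof -
      have "l * (s/n) * (s/n) + m * (b/n) * (b/n) = ((a+s) * s^2 + (d-s) * b^2) / n^2"
        using n0 by (simp add: l_def m_def power2_eq_square field_simps)
      also have "\<dots> = d" using i3 n2 bs s0 by simp
      finally show ?thesis by (simp add: d_def)
    qed
    have "spectral_form X l m (vector [b/n, s/n]) (vector [-s/n, b/n])"
      unfolding spec_coord vector_2 using f0 f1 f2 f3 f4 f5 f6 f7 by blast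
    then show ?thesis by blast
  qed
qed


lemma quad: assumes "spectral_form X l m u v"
  shows "x \<bullet> (X *v x) = l * (u \<bullet> x)^2 + m * (v \<bullet> x)^2"
  using bilin[OF assms, of x x] by (simp add: power2_eq_square inner_commute)

lemma norm_sum: assumes "spectral_form X l m u v"
  shows "(u \<bullet> x)^2 + (v \<bullet> x)^2 = x \<bullet> x"
proof -
  have "norm u = 1" "norm v = 1" "u \<bullet> v = 0" using assms unfolding spectral_form_def by auto
  from basis_expand[OF this, of x x] show ?thesis by (simp add: power2_eq_square inner_commute)
qed

lemma spec_sym: "spectral_form X l m u v \<Longrightarrow> sym2 X"
  unfolding spec_coord sym2_iff by (simp add: algebra_simps)

lemma sym2_diff: "sym2 A \<Longrightarrow> sym2 B \<Longrightarrow> sym2 (A - B)"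
  by (simp add: sym2_iff)

lemma mv_diff: "((A::mat2) - B) *v x = A *v x - B *v x"
  by (simp add: vec_eq_iff forall_2 mv2 algebra_simps)

lemma key:
  fixes d g al be e t s :: real
  assumes d: "d > 0" and g: "g > 0" and ab: "al^2 + be^2 = 1" and e: "e > 0"
    and ee: "e \<le> d * al^2 * g / (2 * d + g)"
  shows "0 \<le> (d + e) * (al * t + be * s)^2 - e * t^2 + (g - e) * s^2"
proof -
  define A where "A = d * al^2 - e"
  define B where "B = d * al * be"
  define C where "C = d * be^2 + g - e"
  have pos: "2 * d + g > 0" using d g by simp
  have e1: "e * (2 * d + g) \<le> d * al^2 * g" using ee pos by (simp add: field_simps)
  have al1: "al^2 \<le> 1" using ab zero_le_power2[of be] by linarith
  have A0: "A \<ge> 0"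
  proof -
    have "d * al^2 * g \<le> d * al^2 * (2 * d + g)" using d by (simp add: mult_left_mono)
    then have "e * (2 * d + g) \<le> d * al^2 * (2 * d + g)" using e1 by linarith
    then have "e \<le> d * al^2" using pos by simp
    then show ?thesis by (simp add: A_def)
  qed
  have C0: "C > 0"
  proof -
    have "d * al^2 * g \<le> d * g" using al1 d g by (simp add: mult_left_le)
    also have "\<dots> < (2 * d + g) * g"
    proof -
      have dg: "0 < d * g" "0 < g * g" using d g by simp_all
      have "(2 * d + g) * g = d * g + (d * g + g * g)" by (simp add: algebra_simps)
      then show ?thesis using dg by linarith
    qed
    finally have "e * (2 * d + g) < g * (2 * d + g)" using e1 by (simp add: mult.commute)
    then have "e < g" using pos by simp
    moreover have "d * be^2 \<ge> 0" using d by simp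
    ultimately show ?thesis by (simp add: C_def)
  qed
  have ACB: "A * C - B^2 \<ge> 0"
  proof -
    have "A * C - B^2 = d * al^2 * g - e * (d * (al^2 + be^2) + g) + e^2"
      by (simp add: A_def B_def C_def power2_eq_square algebra_simps)
    also have "\<dots> = d * al^2 * g - e * (d + g) + e^2" using ab by simp
    finally have "A * C - B^2 = d * al^2 * g - e * (d + g) + e^2" .
    moreover have "e * (d + g) \<le> e * (2 * d + g)" using e d by simp
    moreover have "e^2 \<ge> 0" by simp
    ultimately show ?thesis using e1 by linarith
  qed
  define Q where "Q = A * t^2 + 2 * B * t * s + C * s^2"
  have "C * Q = (C * s + B * t)^2 + (A * C - B^2) * t^2"
    by (simp add: Q_def power2_eq_square algebra_simps)
  also have "\<dots> \<ge> 0" using ACB by simp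
  finally have "C * Q \<ge> 0" .
  then have Q0: "Q \<ge> 0" using C0 by (simp add: zero_le_mult_iff)
  have "(d + e) * (al * t + be * s)^2 - e * t^2 + (g - e) * s^2 = e * (al * t + be * s)^2 + Q"
    by (simp add: Q_def A_def B_def C_def power2_eq_square algebra_simps)
  also have "\<dots> \<ge> 0" using Q0 e by simp
  finally show ?thesis .
qed

theorem lemma7:
  fixes XX :: "mat2 multiset"
    and X1 X2 :: mat2
    and l1 m1 l2 a b :: real
    and u1 v1 u2 p q :: "real^2"
  assumes sym: "\<forall>X\<in>#XX. sym2 X"
    and X1_in: "X1 \<in># XX"
    and X1_spec: "spectral_form X1 l1 m1 u1 v1"
    and l1_largest: "\<forall>e\<in>#eigs XX. e \<le> l1"
    and l1_unique: "count (eigs XX) l1 = 1"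
    and l2_in: "l2 \<in># eigs XX"
    and l2_less: "l2 < l1"
    and l2_second: "\<forall>e\<in>#eigs XX. e \<noteq> l1 \<longrightarrow> e \<le> l2"
    and l2_unique: "count (eigs XX) l2 = 1"
    and X2_in: "X2 \<in># XX"
    and X2_spec: "spectral_form X2 a b p q"
    and u2_eigvec: "(a = l2 \<and> u2 = p) \<or> (b = l2 \<and> u2 = q)"
    and not_perp: "u2 \<bullet> u1 \<noteq> 0"
  shows "\<exists>\<epsilon>>0. l1 *\<^sub>R outer u1 u1 + (l2 - \<epsilon>) *\<^sub>R outer v1 v1 \<in> upper_bounds XX"
proof -
  have hi1: "eig_hi X1 = l1" using eig_hi_eq[OF X1_spec] .
  have lo1: "eig_lo X1 = m1" using eig_lo_eq[OF X1_spec] .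
  have hi2: "eig_hi X2 = a" using eig_hi_eq[OF X2_spec] .
  have lo2: "eig_lo X2 = b" using eig_lo_eq[OF X2_spec] .
  have ml1: "m1 \<le> l1" and ba: "b \<le> a" using X1_spec X2_spec unfolding spectral_form_def by auto
  have n1: "norm u1 = 1" "norm v1 = 1" "u1 \<bullet> v1 = 0" using X1_spec unfolding spectral_form_def by auto
  have n2: "norm p = 1" "norm q = 1" "p \<bullet> q = 0" using X2_spec unfolding spectral_form_def by auto
  obtain M' where M': "XX = add_mset X1 M'" using X1_in by (metis mset_add)
  have E1: "eigs XX = add_mset l1 (add_mset m1 (eigs M'))" using M' eigs_add hi1 lo1 by simp
  have c1: "count (add_mset l1 (add_mset m1 (eigs M'))) l1 = 1" using l1_unique E1 by simp
  have m1l1: "m1 \<noteq> l1" using c1 by (auto split: if_splits)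
  have l1M': "l1 \<notin># eigs M'" using c1 by (auto split: if_splits simp: not_in_iff)
  have X2ne: "X2 \<noteq> X1"
  proof
    assume eq: "X2 = X1"
    have al: "a = l1" "b = m1" using hi1 hi2 lo1 lo2 eq by auto
    with u2_eigvec l2_less have u2q: "u2 = q" by auto
    have "u1 \<bullet> (X1 *v q) = l1 * (u1 \<bullet> q)"
      using bilin[OF X1_spec, of u1 q] n1 by (simp add: norm_eq_1)
    moreover have "u1 \<bullet> (X2 *v q) = b * (u1 \<bullet> q)"
      using bilin[OF X2_spec, of u1 q] n2 by (simp add: norm_eq_1)
    ultimately have "(l1 - m1) * (u1 \<bullet> q) = 0" using eq al by (simp add: algebra_simps)
    then have "u1 \<bullet> q = 0" using m1l1 by simp
    then show False using not_perp u2q by (simp add: inner_commute)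
  qed
  have X2M': "X2 \<in># M'" using X2_in X2ne M' by auto
  obtain M'' where M'': "M' = add_mset X2 M''" using X2M' by (metis mset_add)
  have EM': "eigs M' = add_mset a (add_mset b (eigs M''))" using M'' eigs_add hi2 lo2 by simp
  have E2: "eigs XX = add_mset l1 (add_mset m1 (add_mset a (add_mset b (eigs M''))))"
    using E1 EM' by simp
  have "a \<noteq> l1" using l1M' EM' by auto
  then have al2: "a \<le> l2" using l2_second E2 by auto
  have al2': "a = l2" using u2_eigvec ba al2 by auto
  have c2: "count (add_mset l1 (add_mset m1 (add_mset a (add_mset b (eigs M''))))) l2 = 1"
    using l2_unique E2 by simp
  have bne: "b \<noteq> l2" and m1ne: "m1 \<noteq> l2" and l2M'': "l2 \<notin># eigs M''"
    using c2 al2' l2_less by (auto split: if_splits simp: not_in_iff)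
  have u2p: "u2 = p" using u2_eigvec bne by auto
  have bl2: "b < l2" using ba al2' bne by auto
  have m1lt: "m1 < l2" using l2_second E1 m1l1 m1ne by fastforce
  have M''lt: "\<forall>e\<in>#eigs M''. e < l2"
  proof
    fix e assume e: "e \<in># eigs M''"
    then have "e \<noteq> l1" using l1M' EM' by auto
    then have "e \<le> l2" using l2_second E2 e by auto
    moreover have "e \<noteq> l2" using l2M'' e by auto
    ultimately show "e < l2" by simp
  qed
  define dl where "dl = l1 - l2"
  define g where "g = l2 - b"
  define al where "al = u1 \<bullet> p"
  define be where "be = u1 \<bullet> q"
  define e2 where "e2 = dl * al^2 * g / (2 * dl + g)"
  define F where "F = insert m1 (set_mset (eigs M''))"
  have Ffin: "finite F" "F \<noteq> {}" unfolding F_def by auto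
  have FM: "Max F < l2" using Ffin M''lt m1lt unfolding F_def by simp
  define e0 where "e0 = l2 - Max F"
  define eps where "eps = min e0 e2"
  have dl0: "dl > 0" using l2_less by (simp add: dl_def)
  have g0: "g > 0" using bl2 by (simp add: g_def)
  have al0: "al \<noteq> 0" using not_perp u2p by (simp add: al_def inner_commute)
  have e20: "e2 > 0" using dl0 g0 al0 unfolding e2_def by simp
  have e00: "e0 > 0" using FM by (simp add: e0_def)
  have eps0: "eps > 0" using e20 e00 by (simp add: eps_def)
  have epsF: "\<And>f. f \<in> F \<Longrightarrow> f \<le> l2 - eps"
  proof -
    fix f assume "f \<in> F"
    then have "f \<le> Max F" using Ffin by simp
    then show "f \<le> l2 - eps" unfolding eps_def e0_def by linarith
  qed
  have abe: "al^2 + be^2 = 1"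
    using basis_expand[OF n2, of u1 u1] n1 by (simp add: al_def be_def power2_eq_square inner_commute norm_eq_1)
  define S where "S = l1 *\<^sub>R outer u1 u1 + (l2 - eps) *\<^sub>R outer v1 v1"
  have Sspec: "spectral_form S l1 (l2 - eps) u1 v1"
    using X1_spec eps0 l2_less unfolding spectral_form_def S_def by auto
  have Ssym: "sym2 S" using spec_sym[OF Sspec] .
  have Sq: "\<And>x. x \<bullet> (S *v x) = l1 * (u1 \<bullet> x)^2 + (l2 - eps) * (v1 \<bullet> x)^2"
    using quad[OF Sspec] .
  have Sn: "\<And>x. (u1 \<bullet> x)^2 + (v1 \<bullet> x)^2 = x \<bullet> x" using norm_sum[OF Sspec] .
  have main: "\<And>X x. X \<in># XX \<Longrightarrow> 0 \<le> x \<bullet> (S *v x) - x \<bullet> (X *v x)"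
  proof -
    fix X x assume X: "X \<in># XX"
    define w where "w = u1 \<bullet> x"
    define z where "z = v1 \<bullet> x"
    have Sx: "x \<bullet> (S *v x) = l1 * w^2 + (l2 - eps) * z^2" using Sq by (simp add: w_def z_def)
    have wz: "w^2 + z^2 = x \<bullet> x" using Sn by (simp add: w_def z_def)
    have "X = X1 \<or> X = X2 \<or> X \<in># M''" using X M' M'' by auto
    moreover {
      assume "X = X1"
      then have "x \<bullet> (X *v x) = l1 * w^2 + m1 * z^2" using quad[OF X1_spec] by (simp add: w_def z_def)
      moreover have "m1 \<le> l2 - eps" using epsF by (simp add: F_def)
      then have "m1 * z^2 \<le> (l2 - eps) * z^2" by (rule mult_right_mono) simp
      ultimately have "0 \<le> x \<bullet> (S *v x) - x \<bullet> (X *v x)" using Sx by linarith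
    } moreover {
      assume "X = X2"
      define t where "t = p \<bullet> x"
      define s where "s = q \<bullet> x"
      have Xx: "x \<bullet> (X *v x) = l2 * t^2 + b * s^2" using quad[OF X2_spec] \<open>X = X2\<close> al2' by (simp add: t_def s_def)
      have ts: "t^2 + s^2 = x \<bullet> x" using norm_sum[OF X2_spec] by (simp add: t_def s_def)
      have wts: "w = al * t + be * s" using basis_expand[OF n2, of u1 x] by (simp add: w_def al_def be_def t_def s_def)
      have "eps \<le> e2" by (simp add: eps_def)
      then have K: "0 \<le> (dl + eps) * (al * t + be * s)^2 - eps * t^2 + (g - eps) * s^2"
        using key[OF dl0 g0 abe eps0] unfolding e2_def by blast
      have "x \<bullet> (S *v x) - x \<bullet> (X *v x) = (dl + eps) * w^2 - eps * t^2 + (g - eps) * s^2"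
      proof -
        have z2: "z^2 = t^2 + s^2 - w^2" using wz ts by simp
        show ?thesis unfolding Sx Xx z2 dl_def g_def by (simp add: algebra_simps)
      qed
      then have "0 \<le> x \<bullet> (S *v x) - x \<bullet> (X *v x)" using K wts by simp
    } moreover {
      assume XM: "X \<in># M''"
      have "sym2 X" using sym X by auto
      then obtain h lo uX vX where hs: "spectral_form X h lo uX vX" using spec_exists by blast
      have "h = eig_hi X" using eig_hi_eq[OF hs] by simp
      moreover obtain M3 where "M'' = add_mset X M3" using XM by (metis mset_add)
      ultimately have "h \<in> F" unfolding F_def by (simp add: eigs_add)
      then have hle: "h \<le> l2 - eps" using epsF by simp
      have lh: "lo \<le> h" using hs unfolding spectral_form_def by simp
      have "x \<bullet> (X *v x) = h * (uX \<bullet> x)^2 + lo * (vX \<bullet> x)^2" using quad[OF hs] .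
      also have "\<dots> \<le> h * (uX \<bullet> x)^2 + h * (vX \<bullet> x)^2" using lh by (simp add: mult_right_mono)
      also have "\<dots> = h * (x \<bullet> x)" using norm_sum[OF hs, of x] by (metis distrib_left)
      finally have Xle: "x \<bullet> (X *v x) \<le> h * (w^2 + z^2)" using wz by simp
      have "h * (w^2 + z^2) \<le> l1 * w^2 + (l2 - eps) * z^2"
      proof -
        have "h * w^2 \<le> l1 * w^2" using hle eps0 l2_less by (simp add: mult_right_mono)
        moreover have "h * z^2 \<le> (l2 - eps) * z^2" using hle by (simp add: mult_right_mono)
        ultimately show ?thesis by (simp add: algebra_simps)
      qed
      then have "0 \<le> x \<bullet> (S *v x) - x \<bullet> (X *v x)" using Xle Sx by simp
    }
    ultimately show "0 \<le> x \<bullet> (S *v x) - x \<bullet> (X *v x)" by blast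
  qed
  have "S \<in> upper_bounds XX"
    unfolding upper_bounds_def loewner_le_def psd2_def
  proof (intro CollectI conjI ballI allI)
    show "sym2 S" by (rule Ssym)
    fix X x assume X: "X \<in># XX"
    show "sym2 (S - X)" using Ssym sym X sym2_diff by blast
    show "0 \<le> x \<bullet> ((S - X) *v x)" using main[OF X, of x] by (simp add: mv_diff inner_diff_right)
  qed
  then show ?thesis using eps0 unfolding S_def by blast
qed


end
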